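(* Let $p$ be a NetKAT program that contains no occurrence of $\mathsf{dup}$, and suppose the local compilation $\mathcal{C}(p)$ is defined and equals the forwarding decision diagram $d$. Then for every history $h$, $[\![p]\!]\,h = [\![d]\!]\,h$.
   Context: NetKAT. Fix finitely many fields $f_1,\dots,f_k$, each with natural-number values. A packet $pk$ assigns a natural number $pk.f$ to each field $f$; $pk[f:=n]$ is the packet updated at $f$. A history is a nonempty list of packets, written $pk::h$ (cons) or $\langle pk\rangle$ (singleton). Predicates: $a ::= 1 \mid 0 \mid f=n \mid a+b \mid a\cdot b \mid \neg a$. Programs: $p ::= a \mid f\leftarrow n \mid p+q \mid p\cdot q \mid p^* \mid \mathsf{dup}$. The semantics $[\![p]\!]$ maps histories to sets of histories: $[\![1]\!]h=\{h\}$; $[\![0]\!]h=\emptyset$; $[\![f=n]\!](pk::h)=\{pk::h\}$ if $pk.f=n$ and $\emptyset$ otherwise; $[\![\neg a]\!]h=\{h\}\setminus[\![a]\!]h$; $[\![f\leftarrow n]\!](pk::h)=\{pk[f:=n]::h\}$; $[\![p+q]\!]h=[\![p]\!]h\cup[\![q]\!]h$; $[\![p\cdot q]\!]h=\bigcup_{h'\in[\![p]\!]h}[\![q]\!]h'$; $[\![p^*]\!]h=\bigcup_{i\ge 0}F^i h$ with $F^0h=\{h\}$, $F^{i+1}h=\bigcup_{h'\in[\![p]\!]h}F^ih'$; $[\![\mathsf{dup}]\!](pk::h)=\{pk::pk::h\}$ (on predicates, $+$ and $\cdot$ act as disjunction and conjunction). Forwarding decision diagrams (FDDs). Fields and values carry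 total orders, both written $\sqsubset$. An action $a$ is a finite partial map from fields to values, written $\{f_1\leftarrow n_1,\dots,f_j\leftarrow n_j\}$ with distinct fields; $[\![a]\!](pk::h)=\{pk[f_1:=n_1]\cdots[f_j:=n_j]::h\}$. An FDD is either a constant $\{a_1,\dots,a_m\}$ (a finite set of actions) with $[\![\{a_1,\dots,a_m\}]\!]h=\bigcup_i[\![a_i]\!]h$, or a conditional $(f=n\ ?\ d_1 : d_2)$ with $[\![(f=n?d_1:d_2)]\!](pk::h)=[\![d_1]\!](pk::h)$ if $pk.f=n$ and $[\![d_2]\!](pk::h)$ otherwise. Thus $\{\}$ drops all packets and $\{\{\}\}$ is the identity. Operations on FDDs. Union $d_1+d_2$: $\{A_1\}+\{A_2\}=A_1\cup A_2$ (union of action sets); $(f=n?d_{11}:d_{12})+C=(f=n?d_{11}+C:d_{12}+C)$ for a constant $C$; for $D_2=(f_2=n_2?d_{21}:d_{22})$: $(f_1=n_1?d_{11}:d_{12})+D_2$ equals $(f_1=n_1?d_{11}+d_{21}:d_{12}+d_{22})$ if $f_1=f_2,n_1=n_2$; equals $(f_1=n_1?d_{11}+d_{22}:d_{12}+D_2)$ if $f_1=f_2$ and $n_1\sqsubset n_2$; equals $(f_1=n_1?d_{11}+D_2:d_{12}+D_2)$ if $f_1\sqsubset f_2$; the remaining cases are defined symmetrically. Positive restriction $(f=n)\Rightarrow d$: for a constant $d$ it is $(f=n?d:\{\})$; for $d=(f_1=n_1?d_{11}:d_{12})$ it is $(f=n?d_{11}:\{\})$ if $f=f_1,n=n_1$;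 $(f=n)\Rightarrow d_{12}$ if $f=f_1,n\neq n_1$; $(f=n?d:\{\})$ if $f\sqsubset f_1$; and $(f_1=n_1?(f=n)\Rightarrow d_{11}:(f=n)\Rightarrow d_{12})$ otherwise. Negative restriction $(f\neq n)\Rightarrow d$ is an FDD with $[\![(f\neq n)\Rightarrow d]\!](pk::h)=\emptyset$ if $pk.f=n$ and $=[\![d]\!](pk::h)$ otherwise. Sequencing of actions $a;a'$ is the right-biased merge (value of $a'$ where defined, else of $a$). Sequencing $d_1;d_2$: $a;\{a_1,\dots,a_m\}=\{a;a_1,\dots,a;a_m\}$; $a;(f=n?d_1:d_2)$ equals $a;d_1$ if $f\leftarrow n\in a$, equals $a;d_2$ if $f\leftarrow n'\in a$ with $n'\neq n$, and equals $(f=n?a;d_1:a;d_2)$ otherwise; $\{a_1,\dots,a_m\};d=(a_1;d)+\dots+(a_m;d)$ (which is $\{\}$ when $m=0$); $(f=n?d_{11}:d_{12});d_2=((f=n)\Rightarrow(d_{11};d_2))+((f\neq n)\Rightarrow(d_{12};d_2))$. Negation: $\neg\{\}=\{\{\}\}$; $\neg\{a_1,\dots,a_m\}=\{\}$ for $m\ge1$; $\neg(f=n?d_1:d_2)=(f=n?\neg d_1:\neg d_2)$. Star: $d^*$ is a fixed point of $d'\mapsto\{\{\}\}+(d;d')$ obtained by iteration. Local compilation $\mathcal{C}$: $\mathcal{C}(0)=\{\}$, $\mathcal{C}(1)=\{\{\}\}$, $\mathcal{C}(f\leftarrow n)=\{\{f\leftarrow n\}\}$, $\mathcal{C}(f=n)=(f=n?\{\{\}\}:\{\})$,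 $\mathcal{C}(\neg a)=\neg\mathcal{C}(a)$, $\mathcal{C}(p+q)=\mathcal{C}(p)+\mathcal{C}(q)$, $\mathcal{C}(p\cdot q)=\mathcal{C}(p);\mathcal{C}(q)$, $\mathcal{C}(p^* )=\mathcal{C}(p)^*$. *)

theory Defs
  imports Main
begin

type_synonym 'f packet = "'f \<Rightarrow> nat"
type_synonym 'f history = "'f packet list"   \<comment> \<open>only nonempty lists are histories; head = current packet\<close>

datatype 'f pred =
    PTrue | PFalse | Test 'f nat
  | POr "'f pred" "'f pred" | PAnd "'f pred" "'f pred" | PNot "'f pred"

datatype 'f pol =
    Filter "'f pred" | Mod 'f nat
  | Union "'f pol" "'f pol" | Seq "'f pol" "'f pol" | Star "'f pol" | Dup

fun pred_sem :: "'f pred \<Rightarrow> 'f history \<Rightarrow> 'f history set" where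
  "pred_sem PTrue h = {h}"
| "pred_sem PFalse h = {}"
| "pred_sem (Test f n) [] = {}"
| "pred_sem (Test f n) (pk # h) = (if pk f = n then {pk # h} else {})"
| "pred_sem (POr a b) h = pred_sem a h \<union> pred_sem b h"
| "pred_sem (PAnd a b) h = (\<Union>h'\<in>pred_sem a h. pred_sem b h')"
| "pred_sem (PNot a) h = {h} - pred_sem a h"

primrec kpow :: "('h \<Rightarrow> 'h set) \<Rightarrow> nat \<Rightarrow> 'h \<Rightarrow> 'h set" where
  "kpow F 0 h = {h}"
| "kpow F (Suc i) h = (\<Union>h'\<in>F h. kpow F i h')"

fun pol_sem :: "'f pol \<Rightarrow> 'f history \<Rightarrow> 'f history set" where
  "pol_sem (Filter a) h = pred_sem a h"
| "pol_sem (Mod f n) [] = {}"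
| "pol_sem (Mod f n) (pk # h) = {pk(f := n) # h}"
| "pol_sem (Union p q) h = pol_sem p h \<union> pol_sem q h"
| "pol_sem (Seq p q) h = (\<Union>h'\<in>pol_sem p h. pol_sem q h')"
| "pol_sem (Star p) h = (\<Union>i. kpow (pol_sem p) i h)"
| "pol_sem Dup [] = {}"
| "pol_sem Dup (pk # h) = {pk # pk # h}"

primrec dup_free :: "'f pol \<Rightarrow> bool" where
  "dup_free (Filter a) = True"
| "dup_free (Mod f n) = True"
| "dup_free (Union p q) = (dup_free p \<and> dup_free q)"
| "dup_free (Seq p q) = (dup_free p \<and> dup_free q)"
| "dup_free (Star p) = dup_free p"
| "dup_free Dup = False"

text \<open>An action is a (finite, since there are finitely many fields) partial map
  from fields to values.\<close>
type_synonym 'f action = "'f \<rightharpoonup> nat"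

datatype 'f fdd = Const "'f action set" | Cond 'f nat "'f fdd" "'f fdd"

definition act_apply :: "'f action \<Rightarrow> 'f packet \<Rightarrow> 'f packet" where
  "act_apply a pk = (\<lambda>f. case a f of Some n \<Rightarrow> n | None \<Rightarrow> pk f)"

fun fdd_sem :: "'f fdd \<Rightarrow> 'f history \<Rightarrow> 'f history set" where
  "fdd_sem d [] = {}"
| "fdd_sem (Const A) (pk # h) = (\<Union>a\<in>A. {act_apply a pk # h})"
| "fdd_sem (Cond f n d1 d2) (pk # h) =
     (if pk f = n then fdd_sem d1 (pk # h) else fdd_sem d2 (pk # h))"

fun fdd_union :: "'f::linorder fdd \<Rightarrow> 'f fdd \<Rightarrow> 'f fdd" where
  "fdd_union (Const A) (Const B) = Const (A \<union> B)"
| "fdd_union (Cond f n d1 d2) (Const B) =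
     Cond f n (fdd_union d1 (Const B)) (fdd_union d2 (Const B))"
| "fdd_union (Const A) (Cond f n d1 d2) =
     Cond f n (fdd_union (Const A) d1) (fdd_union (Const A) d2)"
| "fdd_union (Cond f1 n1 d11 d12) (Cond f2 n2 d21 d22) =
     (if f1 = f2 \<and> n1 = n2 then Cond f1 n1 (fdd_union d11 d21) (fdd_union d12 d22)
      else if f1 = f2 \<and> n1 < n2 then
        Cond f1 n1 (fdd_union d11 d22) (fdd_union d12 (Cond f2 n2 d21 d22))
      else if f1 = f2 then
        Cond f2 n2 (fdd_union d12 d21) (fdd_union (Cond f1 n1 d11 d12) d22)
      else if f1 < f2 then
        Cond f1 n1 (fdd_union d11 (Cond f2 n2 d21 d22)) (fdd_union d12 (Cond f2 n2 d21 d22))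
      else
        Cond f2 n2 (fdd_union (Cond f1 n1 d11 d12) d21) (fdd_union (Cond f1 n1 d11 d12) d22))"

primrec pos_restr :: "'f::linorder \<Rightarrow> nat \<Rightarrow> 'f fdd \<Rightarrow> 'f fdd" where
  "pos_restr f n (Const A) = Cond f n (Const A) (Const {})"
| "pos_restr f n (Cond f1 n1 d11 d12) =
     (if f = f1 \<and> n = n1 then Cond f n d11 (Const {})
      else if f = f1 then pos_restr f n d12
      else if f < f1 then Cond f n (Cond f1 n1 d11 d12) (Const {})
      else Cond f1 n1 (pos_restr f n d11) (pos_restr f n d12))"

text \<open>The paper specifies the negative restriction (f \<noteq> n) \<Rightarrow> d only by its semantics;
  we therefore take it as a parameter satisfying this specification.\<close>
definition neg_restr_spec :: "('f \<Rightarrow> nat \<Rightarrow> 'f fdd \<Rightarrow> 'f fdd) \<Rightarrow> bool" where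
  "neg_restr_spec nr \<longleftrightarrow>
     (\<forall>f n d pk h. fdd_sem (nr f n d) (pk # h) =
        (if pk f = n then {} else fdd_sem d (pk # h)))"

primrec seq_act :: "'f action \<Rightarrow> 'f fdd \<Rightarrow> 'f fdd" where
  "seq_act a (Const B) = Const ((\<lambda>b. a ++ b) ` B)"
| "seq_act a (Cond f n d1 d2) =
     (case a f of
        Some n' \<Rightarrow> (if n' = n then seq_act a d1 else seq_act a d2)
      | None \<Rightarrow> Cond f n (seq_act a d1) (seq_act a d2))"

text \<open>For a constant {a1,...,am}, the sum (a1;d)+...+(am;d) is
  formed along some fixed enumeration of the finite action set (ending in + {},
  which is the syntactic identity of union; m = 0 gives {}).\<close>
primrec fdd_seq :: "('f::linorder \<Rightarrow> nat \<Rightarrow> 'f fdd \<Rightarrow> 'f fdd) \<Rightarrow> 'f fdd \<Rightarrow> 'f fdd \<Rightarrow> 'f fdd" where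
  "fdd_seq nr (Const A) d =
     foldr (\<lambda>a acc. fdd_union (seq_act a d) acc) (SOME xs. set xs = A \<and> distinct xs) (Const {})"
| "fdd_seq nr (Cond f n d11 d12) d =
     fdd_union (pos_restr f n (fdd_seq nr d11 d)) (nr f n (fdd_seq nr d12 d))"

primrec fdd_neg :: "'f fdd \<Rightarrow> 'f fdd" where
  "fdd_neg (Const A) = (if A = {} then Const {Map.empty} else Const {})"
| "fdd_neg (Cond f n d1 d2) = Cond f n (fdd_neg d1) (fdd_neg d2)"

primrec star_iter :: "('f::linorder \<Rightarrow> nat \<Rightarrow> 'f fdd \<Rightarrow> 'f fdd) \<Rightarrow> 'f fdd \<Rightarrow> nat \<Rightarrow> 'f fdd" where
  "star_iter nr d 0 = Const {Map.empty}"
| "star_iter nr d (Suc k) = fdd_union (Const {Map.empty}) (fdd_seq nr d (star_iter nr d k))"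

definition fdd_star :: "('f::linorder \<Rightarrow> nat \<Rightarrow> 'f fdd \<Rightarrow> 'f fdd) \<Rightarrow> 'f fdd \<Rightarrow> 'f fdd option" where
  "fdd_star nr d =
     (if \<exists>k. star_iter nr d (Suc k) = star_iter nr d k
      then Some (star_iter nr d (LEAST k. star_iter nr d (Suc k) = star_iter nr d k))
      else None)"

primrec compile_pred :: "('f::linorder \<Rightarrow> nat \<Rightarrow> 'f fdd \<Rightarrow> 'f fdd) \<Rightarrow> 'f pred \<Rightarrow> 'f fdd" where
  "compile_pred nr PFalse = Const {}"
| "compile_pred nr PTrue = Const {Map.empty}"
| "compile_pred nr (Test f n) = Cond f n (Const {Map.empty}) (Const {})"
| "compile_pred nr (PNot a) = fdd_neg (compile_pred nr a)"
| "compile_pred nr (POr a b) = fdd_union (compile_pred nr a) (compile_pred nr b)"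
| "compile_pred nr (PAnd a b) = fdd_seq nr (compile_pred nr a) (compile_pred nr b)"

primrec compile :: "('f::linorder \<Rightarrow> nat \<Rightarrow> 'f fdd \<Rightarrow> 'f fdd) \<Rightarrow> 'f pol \<Rightarrow> 'f fdd option" where
  "compile nr (Filter a) = Some (compile_pred nr a)"
| "compile nr (Mod f n) = Some (Const {[f \<mapsto> n]})"
| "compile nr (Union p q) =
     (case (compile nr p, compile nr q) of
        (Some d1, Some d2) \<Rightarrow> Some (fdd_union d1 d2) | _ \<Rightarrow> None)"
| "compile nr (Seq p q) =
     (case (compile nr p, compile nr q) of
        (Some d1, Some d2) \<Rightarrow> Some (fdd_seq nr d1 d2) | _ \<Rightarrow> None)"
| "compile nr (Star p) = Option.bind (compile nr p) (fdd_star nr)"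
| "compile nr Dup = None"

end

theory Submission
  imports Defs
begin

lemma fdd_sem_Nil_elem: "x \<in> fdd_sem d h \<Longrightarrow> x \<noteq> []"
  by (induction d h rule: fdd_sem.induct) (auto split: if_splits)

lemma union_sem: "fdd_sem (fdd_union d1 d2) h = fdd_sem d1 h \<union> fdd_sem d2 h"
proof (induction d1 d2 rule: fdd_union.induct)
  case (4 f1 n1 d11 d12 f2 n2 d21 d22)
  then show ?case
    by (cases h) (auto simp del: fdd_union.simps simp: fdd_union.simps(4)[of f1 n1 d11 d12 f2 n2 d21 d22] split: if_splits)
qed (cases h; auto)+

lemma pos_restr_sem: "fdd_sem (pos_restr f n d) (pk # h) = (if pk f = n then fdd_sem d (pk # h) else {})"
  by (induction d) auto

lemma act_apply_add: "act_apply (a ++ b) pk = act_apply b (act_apply a pk)"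
  unfolding act_apply_def map_add_def by (auto split: option.splits)

lemma act_apply_Some: "a f = Some v \<Longrightarrow> act_apply a pk f = v"
  by (simp add: act_apply_def)

lemma act_apply_None: "a f = None \<Longrightarrow> act_apply a pk f = pk f"
  by (simp add: act_apply_def)

lemma seq_act_sem: "fdd_sem (seq_act a d) (pk # h) = fdd_sem d (act_apply a pk # h)"
proof (induction d)
  case (Const B)
  then show ?case by (auto simp: act_apply_add)
next
  case (Cond f n d1 d2)
  then show ?case by (cases "a f") (auto simp: act_apply_Some act_apply_None)
qed

lemma foldr_sem:
  "fdd_sem (foldr (\<lambda>a acc. fdd_union (seq_act a d) acc) xs (Const {})) x
   = (\<Union>a\<in>set xs. fdd_sem (seq_act a d) x)"
  by (induction xs) (cases x; auto simp: union_sem)+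

primrec leaf :: "'f fdd \<Rightarrow> 'f packet \<Rightarrow> 'f action set" where
  "leaf (Const A) pk = A"
| "leaf (Cond f n d1 d2) pk = (if pk f = n then leaf d1 pk else leaf d2 pk)"

lemma sem_leaf: "fdd_sem d (pk # h) = (\<lambda>a. act_apply a pk # h) ` leaf d pk"
  by (induction d) auto

lemma fiber_finite:
  fixes q :: "'f::finite packet"
  shows "finite {a :: 'f action. act_apply a pk = q}"
proof -
  have "inj_on dom {a :: 'f action. act_apply a pk = q}"
  proof (rule inj_onI)
    fix a b :: "'f action"
    assume a: "a \<in> {a. act_apply a pk = q}" and b: "b \<in> {a. act_apply a pk = q}" and d: "dom a = dom b"
    show "a = b"
    proof
      fix f
      have "act_apply a pk f = act_apply b pk f" using a b by simp
      moreover have "f \<in> dom a \<longleftrightarrow> f \<in> dom b" using d by simp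
      ultimately show "a f = b f" unfolding act_apply_def
        by (cases "a f"; cases "b f"; auto)
    qed
  qed
  moreover have "finite (dom ` {a :: 'f action. act_apply a pk = q})" by simp
  ultimately show ?thesis using finite_imageD by blast
qed

lemma finite_leaf:
  fixes d :: "'f::finite fdd"
  assumes "finite (fdd_sem d (pk # h))"
  shows "finite (leaf d pk)"
proof -
  let ?g = "\<lambda>a. act_apply a pk # h"
  have fin: "finite (?g ` leaf d pk)" using assms sem_leaf by metis
  have "finite (?g -` (?g ` leaf d pk) \<inter> leaf d pk)"
  proof (rule finite_finite_vimage_IntI[OF fin])
    fix y assume "y \<in> ?g ` leaf d pk"
    then obtain q where "y = q # h" by auto
    have "?g -` {y} \<inter> leaf d pk \<subseteq> {a. act_apply a pk = q}" using \<open>y = q # h\<close> by auto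
    then show "finite (?g -` {y} \<inter> leaf d pk)" using fiber_finite finite_subset by metis
  qed
  moreover have "?g -` (?g ` leaf d pk) \<inter> leaf d pk = leaf d pk" by auto
  ultimately show ?thesis by simp
qed

lemma seq_sem:
  assumes nr: "neg_restr_spec nr" and fin: "finite (leaf d1 pk)"
  shows "fdd_sem (fdd_seq nr d1 d2) (pk # h) = (\<Union>h'\<in>fdd_sem d1 (pk # h). fdd_sem d2 h')"
  using fin
proof (induction d1)
  case (Const A)
  have "\<exists>xs. set xs = A \<and> distinct xs" using Const finite_distinct_list by auto
  then have s: "set (SOME xs. set xs = A \<and> distinct xs) = A" by (metis (mono_tags, lifting) someI_ex)
  show ?case by (simp add: foldr_sem s seq_act_sem)
next
  case (Cond f n d11 d12)
  show ?case using Cond nr unfolding neg_restr_spec_def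
    by (simp add: union_sem pos_restr_sem split: if_splits)
qed

definition FS :: "'f fdd \<Rightarrow> bool" where
  "FS d \<longleftrightarrow> (\<forall>pk h. finite (fdd_sem d (pk # h)))"

lemma FS_finite: "FS d \<Longrightarrow> finite (fdd_sem d h)"
  unfolding FS_def by (cases h) auto

lemma seq_sem':
  fixes d1 :: "'f::{finite,linorder} fdd"
  assumes "neg_restr_spec nr" "FS d1"
  shows "fdd_sem (fdd_seq nr d1 d2) (pk # h) = (\<Union>h'\<in>fdd_sem d1 (pk # h). fdd_sem d2 h')"
proof -
  have "finite (fdd_sem d1 (pk # h))" using assms(2) unfolding FS_def by simp
  then have "finite (leaf d1 pk)" by (rule finite_leaf)
  then show ?thesis by (rule seq_sem[OF assms(1)])
qed

lemma FS_seq: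
  fixes d1 :: "'f::{finite,linorder} fdd"
  assumes "neg_restr_spec nr" "FS d1" "FS d2"
  shows "FS (fdd_seq nr d1 d2)"
  unfolding FS_def
proof (intro allI)
  fix pk h
  show "finite (fdd_sem (fdd_seq nr d1 d2) (pk # h))"
    unfolding seq_sem'[OF assms(1,2)]
    using assms(2,3) FS_finite by (intro finite_UN_I) auto
qed

lemma FS_union: "FS d1 \<Longrightarrow> FS d2 \<Longrightarrow> FS (fdd_union d1 d2)"
  unfolding FS_def by (simp add: union_sem)

lemma neg_sem:
  "fdd_sem d (pk # h) \<subseteq> {pk # h} \<Longrightarrow>
   fdd_sem (fdd_neg d) (pk # h) = {pk # h} - fdd_sem d (pk # h)"
proof (induction d)
  case (Const A)
  show ?case
  proof (cases "A = {}")
    case True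
    then show ?thesis by (simp add: act_apply_def)
  next
    case False
    then have "fdd_sem (Const A) (pk # h) \<noteq> {}" by auto
    then have "fdd_sem (Const A) (pk # h) = {pk # h}" using Const by blast
    then show ?thesis using False by simp
  qed
qed auto

lemma pred_sub: "pred_sem a h \<subseteq> {h}"
  by (induction a h rule: pred_sem.induct) auto

lemma compile_pred_sem:
  fixes nr :: "'f::{finite,linorder} \<Rightarrow> nat \<Rightarrow> 'f fdd \<Rightarrow> 'f fdd"
  assumes nr: "neg_restr_spec nr"
  shows "fdd_sem (compile_pred nr a) (pk # h) = pred_sem a (pk # h)"
proof (induction a arbitrary: pk h)
  case (PAnd a b)
  have fs: "FS (compile_pred nr a)"
    unfolding FS_def using PAnd.IH(1) pred_sub by (metis finite.emptyI finite_insert finite_subset)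
  have e: "\<And>x. x \<in> pred_sem a (pk # h) \<Longrightarrow> fdd_sem (compile_pred nr b) x = pred_sem b x"
  proof -
    fix x assume "x \<in> pred_sem a (pk # h)"
    then have "x = pk # h" using pred_sub[of a "pk # h"] by blast
    then show "fdd_sem (compile_pred nr b) x = pred_sem b x" using PAnd.IH(2) by simp
  qed
  show ?case
    by (simp add: seq_sem'[OF nr fs] PAnd.IH(1) e)
next
  case (PNot a)
  then show ?case using neg_sem pred_sub by (metis compile_pred.simps(4) pred_sem.simps(7))
qed (auto simp: union_sem act_apply_def)

lemma UN_shift: "(\<Union>i\<le>Suc k. A i) = A 0 \<union> (\<Union>i\<le>k. A (Suc i))"
proof -
  have "{..Suc k} = insert 0 (Suc ` {..k})" by (rule atMost_Suc_eq_insert_0)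
  then show ?thesis by simp
qed

lemma star_iter_sem:
  fixes nr :: "'f::{finite,linorder} \<Rightarrow> nat \<Rightarrow> 'f fdd \<Rightarrow> 'f fdd"
  assumes nr: "neg_restr_spec nr" and fs: "FS d"
  shows "fdd_sem (star_iter nr d k) (pk # h) = (\<Union>i\<le>k. kpow (fdd_sem d) i (pk # h))"
proof (induction k arbitrary: pk h)
  case 0
  then show ?case by (simp add: act_apply_def)
next
  case (Suc k)
  have "fdd_sem (star_iter nr d (Suc k)) (pk # h)
      = {pk # h} \<union> (\<Union>h'\<in>fdd_sem d (pk # h). fdd_sem (star_iter nr d k) h')"
    by (simp add: union_sem seq_sem'[OF nr fs] act_apply_def)
  also have "\<dots> = {pk # h} \<union> (\<Union>h'\<in>fdd_sem d (pk # h). \<Union>i\<le>k. kpow (fdd_sem d) i h')"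
  proof -
    have "\<And>h'. h' \<in> fdd_sem d (pk # h) \<Longrightarrow> fdd_sem (star_iter nr d k) h' = (\<Union>i\<le>k. kpow (fdd_sem d) i h')"
      using Suc.IH fdd_sem_Nil_elem by (metis list.exhaust)
    then show ?thesis by auto
  qed
  also have "\<dots> = (\<Union>i\<le>Suc k. kpow (fdd_sem d) i (pk # h))"
  proof -
    have "(\<Union>i\<le>Suc k. kpow (fdd_sem d) i (pk # h)) = kpow (fdd_sem d) 0 (pk # h) \<union> (\<Union>i\<le>k. kpow (fdd_sem d) (Suc i) (pk # h))"
      by (rule UN_shift)
    then show ?thesis by auto
  qed
  finally show ?case .
qed

lemma FS_star_iter:
  fixes nr :: "'f::{finite,linorder} \<Rightarrow> nat \<Rightarrow> 'f fdd \<Rightarrow> 'f fdd"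
  assumes nr: "neg_restr_spec nr" and fs: "FS d"
  shows "FS (star_iter nr d k)"
proof (induction k)
  case 0
  then show ?case by (simp add: FS_def)
next
  case (Suc k)
  have "FS (Const {Map.empty} :: 'f fdd)" by (simp add: FS_def)
  then show ?case using FS_union FS_seq[OF nr fs Suc] by simp
qed

lemma kpow_cong:
  assumes "\<And>x. x \<noteq> [] \<Longrightarrow> F x = G x" and "\<And>x y. y \<in> F x \<Longrightarrow> y \<noteq> []" and "x \<noteq> []"
  shows "kpow F i x = kpow G i x"
  using assms(3)
proof (induction i arbitrary: x)
  case (Suc i)
  then show ?case using assms(1,2) by (auto simp del: kpow.simps simp: kpow.simps(2)) (metis assms(1) Suc.prems)+
qed simp

lemma star_iter_stable:
  assumes "star_iter nr d (Suc k) = star_iter nr d k"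
  shows "star_iter nr d (k + j) = star_iter nr d k"
  using assms by (induction j) auto

theorem main:
  fixes nr :: "'f::{finite,linorder} \<Rightarrow> nat \<Rightarrow> 'f fdd \<Rightarrow> 'f fdd"
  assumes nr: "neg_restr_spec nr"
  shows "dup_free p \<Longrightarrow> compile nr p = Some d \<Longrightarrow>
    FS d \<and> (\<forall>pk h. pol_sem p (pk # h) = fdd_sem d (pk # h))"
proof (induction p arbitrary: d)
  case (Filter a)
  then show ?case using compile_pred_sem[OF nr] pred_sub unfolding FS_def
    by (metis compile.simps(1) finite.emptyI finite_insert finite_subset option.inject pol_sem.simps(1))
next
  case (Mod f n)
  have "\<And>pk. act_apply [f \<mapsto> n] pk = pk(f := n)" by (auto simp: act_apply_def)
  then show ?case using Mod by (auto simp: FS_def)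
next
  case (Union p q)
  from Union.prems obtain d1 d2 where c1: "compile nr p = Some d1" and c2: "compile nr q = Some d2"
    and d: "d = fdd_union d1 d2" by (auto split: option.splits)
  have I1: "FS d1" "\<forall>pk h. pol_sem p (pk # h) = fdd_sem d1 (pk # h)" using Union c1 by auto
  have I2: "FS d2" "\<forall>pk h. pol_sem q (pk # h) = fdd_sem d2 (pk # h)" using Union c2 by auto
  show ?case using I1 I2 d FS_union by (simp add: union_sem)
next
  case (Seq p q)
  from Seq.prems obtain d1 d2 where c1: "compile nr p = Some d1" and c2: "compile nr q = Some d2"
    and d: "d = fdd_seq nr d1 d2" by (auto split: option.splits)
  have I1: "FS d1" "\<forall>pk h. pol_sem p (pk # h) = fdd_sem d1 (pk # h)" using Seq c1 by auto
  have I2: "FS d2" "\<forall>pk h. pol_sem q (pk # h) = fdd_sem d2 (pk # h)" using Seq c2 by auto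
  have "\<And>pk h. pol_sem (Seq p q) (pk # h) = fdd_sem d (pk # h)"
  proof -
    fix pk h
    have "\<And>h'. h' \<in> fdd_sem d1 (pk # h) \<Longrightarrow> pol_sem q h' = fdd_sem d2 h'"
      using I2(2) fdd_sem_Nil_elem by (metis list.exhaust)
    then show "pol_sem (Seq p q) (pk # h) = fdd_sem d (pk # h)"
      using I1(2) by (simp add: d seq_sem'[OF nr I1(1)])
  qed
  then show ?case using FS_seq[OF nr I1(1) I2(1)] d by simp
next
  case (Star p)
  from Star.prems obtain d0 where c: "compile nr p = Some d0" and s: "fdd_star nr d0 = Some d"
    by (auto split: Option.bind_splits)
  have I: "FS d0" "\<forall>pk h. pol_sem p (pk # h) = fdd_sem d0 (pk # h)" using Star c by auto
  let ?P = "\<lambda>k. star_iter nr d0 (Suc k) = star_iter nr d0 k"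
  have ex: "\<exists>k. ?P k" and dk: "d = star_iter nr d0 (LEAST k. ?P k)"
    using s unfolding fdd_star_def by (auto split: if_splits)
  define k where "k = (LEAST k. ?P k)"
  have k: "?P k" unfolding k_def using ex by (rule LeastI_ex)
  have dk: "d = star_iter nr d0 k" using dk k_def by simp
  have "\<And>pk h. pol_sem (Star p) (pk # h) = fdd_sem d (pk # h)"
  proof -
    fix pk h
    have kp0: "\<And>i. kpow (fdd_sem d0) i (pk # h) = kpow (pol_sem p) i (pk # h)"
      by (rule kpow_cong) (use I(2) fdd_sem_Nil_elem in \<open>auto simp: neq_Nil_conv\<close>)
    then have kp: "\<And>i. kpow (pol_sem p) i (pk # h) = kpow (fdd_sem d0) i (pk # h)" by simp
    have "(\<Union>i. kpow (fdd_sem d0) i (pk # h)) = fdd_sem d (pk # h)"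
    proof
      show "(\<Union>i. kpow (fdd_sem d0) i (pk # h)) \<subseteq> fdd_sem d (pk # h)"
      proof
        fix x assume "x \<in> (\<Union>i. kpow (fdd_sem d0) i (pk # h))"
        then obtain i where "x \<in> kpow (fdd_sem d0) i (pk # h)" by auto
        then have "x \<in> fdd_sem (star_iter nr d0 (k + i)) (pk # h)"
          by (auto simp: star_iter_sem[OF nr I(1)])
        then show "x \<in> fdd_sem d (pk # h)" using star_iter_stable[OF k] dk by metis
      qed
    next
      show "fdd_sem d (pk # h) \<subseteq> (\<Union>i. kpow (fdd_sem d0) i (pk # h))"
        using dk by (auto simp: star_iter_sem[OF nr I(1)])
    qed
    then show "pol_sem (Star p) (pk # h) = fdd_sem d (pk # h)" using kp by simp
  qed
  then show ?case using FS_star_iter[OF nr I(1)] dk by simp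
next
  case Dup
  then show ?case by simp
qed

theorem theorem1:
  fixes nr :: "'f::{finite,linorder} \<Rightarrow> nat \<Rightarrow> 'f fdd \<Rightarrow> 'f fdd"
    and p :: "'f pol" and d :: "'f fdd" and h :: "'f history"
  assumes "neg_restr_spec nr"
    and "dup_free p"
    and "compile nr p = Some d"
    and "h \<noteq> []"
  shows "pol_sem p h = fdd_sem d h"
  using main[OF assms(1,2,3)] assms(4) by (metis neq_Nil_conv)

end
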